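(* Let $X=(\mathbb R^2,\|\cdot\|_2,\mathcal L^2)$ and $S=\{(x_1,x_2)\in\mathbb R^2: x_1\in[0,1],\ x_2=0\}$. Then for each $\theta\in(1,2)$ there exists a sequence of measures $\{\mathfrak m_k\}\in\mathfrak M_\theta(S)\setminus\mathfrak M^{str}_\theta(S)$.
   Context: Balls are closed: $B_r(x)=\{y:\|y-x\|_2\le r\}$; $\mu=\mathcal L^2$ is Lebesgue measure. A measure means a nonzero Borel regular locally finite measure. For $\theta\ge0$ and a closed nonempty $S$, $\{\mathfrak m_k\}_{k=0}^\infty\in\mathfrak M_\theta(S)$ if there is $\epsilon\in(0,1)$ such that: (M1) $\operatorname{supp}\mathfrak m_k=S$ for all $k\in\mathbb N_0$; (M2) there is $C_1>0$ with $\mathfrak m_k(B_r(x))\le C_1\mu(B_r(x))/r^\theta$ for all $k$, $x\in X$, $r\in(0,\epsilon^k]$; (M3) there is $C_2>0$ with $\mathfrak m_k(B_r(x))\ge C_2\mu(B_r(x))/r^\theta$ for all $k$, $x\in S$, $r\in[\epsilon^k,1]$; (M4) $\mathfrak m_k=w_k\mathfrak m_0$ with $w_k\in L^\infty(\mathfrak m_0)$ and $C_3>0$ such that $\epsilon^{\theta j}/C_3\le w_k(x)/w_{k+j}(x)\le C_3$ for $\mathfrak m_0$-a.e. $x\in S$ and all $k,j\in\mathbb N_0$. $\{\mathfrak m_k\}\in\mathfrak M^{str}_\theta(S)$ if moreover (M5) for every Borel $E\subset S$, $\limsup_{k\to\infty}\mathfrak m_k(B_{\epsilon^k}(x)\cap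 E)/\mathfrak m_k(B_{\epsilon^k}(x))>0$ for $\mathfrak m_0$-a.e. $x\in E$. *)

theory Defs
  imports "HOL-Analysis.Analysis"
begin

definition muB :: "real^2 \<Rightarrow> real \<Rightarrow> real" where
  "muB x r = measure lborel (cball x r)"

text \<open>A measure: nonzero, Borel, locally finite (on R^2 such measures are Borel regular).\<close>
definition is_measure2 :: "(real^2) measure \<Rightarrow> bool" where
  "is_measure2 M \<longleftrightarrow> sets M = sets borel \<and> emeasure M UNIV \<noteq> 0 \<and>
     (\<forall>K. compact K \<longrightarrow> emeasure M K < \<infinity>)"

definition supp :: "(real^2) measure \<Rightarrow> (real^2) set" where
  "supp M = {x. \<forall>r>0. emeasure M (ball x r) > 0}"

definition M_cond :: "real \<Rightarrow> (real^2) set \<Rightarrow> (nat \<Rightarrow> (real^2) measure) \<Rightarrow> real \<Rightarrow> bool" where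
  "M_cond \<theta> S m \<epsilon> \<longleftrightarrow> 0 < \<epsilon> \<and> \<epsilon> < 1 \<and>
     (\<forall>k. is_measure2 (m k)) \<and>
     \<comment> \<open>(M1)\<close>
     (\<forall>k. supp (m k) = S) \<and>
     \<comment> \<open>(M2)\<close>
     (\<exists>C1>0. \<forall>k x r. 0 < r \<and> r \<le> \<epsilon> ^ k \<longrightarrow>
        emeasure (m k) (cball x r) \<le> ennreal (C1 * muB x r / r powr \<theta>)) \<and>
     \<comment> \<open>(M3)\<close>
     (\<exists>C2>0. \<forall>k x r. x \<in> S \<and> \<epsilon> ^ k \<le> r \<and> r \<le> 1 \<longrightarrow>
        ennreal (C2 * muB x r / r powr \<theta>) \<le> emeasure (m k) (cball x r)) \<and>
     \<comment> \<open>(M4)\<close>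
     (\<exists>w :: nat \<Rightarrow> real^2 \<Rightarrow> real.
        (\<forall>k. w k \<in> borel_measurable borel \<and> (\<exists>B. AE x in m 0. \<bar>w k x\<bar> \<le> B) \<and>
             m k = density (m 0) (\<lambda>x. ennreal (w k x))) \<and>
        (\<exists>C3>0. \<forall>k j. AE x in m 0. x \<in> S \<longrightarrow>
             \<epsilon> powr (\<theta> * real j) / C3 \<le> w k x / w (k + j) x \<and> w k x / w (k + j) x \<le> C3))"

definition M5_cond :: "(real^2) set \<Rightarrow> (nat \<Rightarrow> (real^2) measure) \<Rightarrow> real \<Rightarrow> bool" where
  "M5_cond S m \<epsilon> \<longleftrightarrow>
     (\<forall>E \<in> sets borel. E \<subseteq> S \<longrightarrow>
        (AE x in m 0. x \<in> E \<longrightarrow>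
           limsup (\<lambda>k. ereal (measure (m k) (cball x (\<epsilon> ^ k) \<inter> E) /
                               measure (m k) (cball x (\<epsilon> ^ k)))) > 0))"

definition MFam :: "real \<Rightarrow> (real^2) set \<Rightarrow> (nat \<Rightarrow> (real^2) measure) set" where
  "MFam \<theta> S = {m. \<exists>\<epsilon>. M_cond \<theta> S m \<epsilon>}"

definition MFam_str :: "real \<Rightarrow> (real^2) set \<Rightarrow> (nat \<Rightarrow> (real^2) measure) set" where
  "MFam_str \<theta> S = {m. \<exists>\<epsilon>. M_cond \<theta> S m \<epsilon> \<and> M5_cond S m \<epsilon>}"

definition segS :: "(real^2) set" where
  "segS = {x. 0 \<le> x $ 1 \<and> x $ 1 \<le> 1 \<and> x $ 2 = 0}"

end

theory Submission
  imports Defs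
begin

definition dig :: "nat \<Rightarrow> nat \<Rightarrow> real \<Rightarrow> real" where
  "dig m i t = real_of_int (\<lfloor>real m ^ Suc i * t\<rfloor> - int m * \<lfloor>real m ^ i * t\<rfloor>)"

lemma dig_bounds:
  assumes "m > 0"
  shows "0 \<le> dig m i t" "dig m i t \<le> real m - 1"
proof -
  define x where "x = real m ^ i * t"
  have e: "real m ^ Suc i * t = real m * x" by (simp add: x_def)
  have a: "real m * real_of_int \<lfloor>x\<rfloor> \<le> real m * x" using assms by simp
  have b: "real m * x < real m * (real_of_int \<lfloor>x\<rfloor> + 1)" using assms by simp
  have 1: "int m * \<lfloor>x\<rfloor> \<le> \<lfloor>real m * x\<rfloor>"
    using a by (metis floor_mono floor_of_int of_int_mult of_int_of_nat_eq)
  have 2: "\<lfloor>real m * x\<rfloor> < int m * \<lfloor>x\<rfloor> + int m"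
    using b by (metis (no_types, opaque_lifting) distrib_left floor_less_iff mult.right_neutral of_int_add of_int_mult of_int_of_nat_eq of_int_1)
  have d: "dig m i t = real_of_int (\<lfloor>real m * x\<rfloor> - int m * \<lfloor>x\<rfloor>)"
    by (simp only: dig_def e x_def[symmetric])
  show "0 \<le> dig m i t" using 1 unfolding d by (intro of_int_nonneg) simp
  show "dig m i t \<le> real m - 1" using 2 unfolding d by linarith
qed


definition qq :: "nat \<Rightarrow> real" where "qq m = 1 / (real m + 1)"

definition gf :: "nat \<Rightarrow> real \<Rightarrow> real" where
  "gf m t = (\<Sum>i. dig m i t * qq m ^ Suc i)"

definition Gp :: "nat \<Rightarrow> nat \<Rightarrow> real \<Rightarrow> real" where
  "Gp m n t = (\<Sum>i<n. dig m i t * qq m ^ Suc i)"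

lemma qq_pos: "0 < qq m" "qq m < 1 \<or> m = 0" "qq m \<le> 1"
  by (auto simp: qq_def)

lemma qq_lt1: "m > 0 \<Longrightarrow> qq m < 1"
  by (simp add: qq_def)

lemma geom_sum_shift:
  assumes "m > 0"
  shows "(\<lambda>i. (real m - 1) * qq m ^ Suc (i + n)) sums ((real m - 1) * qq m ^ n / real m)"
proof -
  have q1: "norm (qq m) < 1" using qq_pos(1)[of m] qq_lt1[OF assms] by simp
  have "(\<lambda>i. qq m ^ i) sums (1 / (1 - qq m))" using geometric_sums[OF q1] .
  then have "(\<lambda>i. ((real m - 1) * qq m ^ Suc n) * qq m ^ i) sums (((real m - 1) * qq m ^ Suc n) * (1 / (1 - qq m)))"
    by (rule sums_mult)
  moreover have "((real m - 1) * qq m ^ Suc n) * (1 / (1 - qq m)) = (real m - 1) * qq m ^ n / real m"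
  proof -
    have "1 - qq m = real m * qq m" by (simp add: qq_def field_simps)
    then have "((real m - 1) * qq m ^ Suc n) * (1 / (1 - qq m)) = ((real m - 1) * qq m ^ n) * qq m / (real m * qq m)"
      by simp
    also have "\<dots> = (real m - 1) * qq m ^ n / real m" using qq_pos(1)[of m] by simp
    finally show ?thesis .
  qed
  moreover have "\<And>i. ((real m - 1) * qq m ^ Suc n) * qq m ^ i = (real m - 1) * qq m ^ Suc (i + n)"
    by (simp add: power_add algebra_simps)
  ultimately show ?thesis by (simp only:)
qed

lemma gf_summable:
  assumes "m > 0"
  shows "summable (\<lambda>i. dig m i t * qq m ^ Suc i)"
proof (rule summable_comparison_test')
  show "summable (\<lambda>i. (real m - 1) * qq m ^ Suc (i + 0))"
    using geom_sum_shift[OF assms, of 0] by (rule sums_summable)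
  fix i assume "i \<ge> (0::nat)"
  show "norm (dig m i t * qq m ^ Suc i) \<le> (real m - 1) * qq m ^ Suc (i + 0)"
    using dig_bounds[OF assms, of i t] qq_pos(1)[of m]
    by (simp add: abs_mult mult_right_mono)
qed

lemma gf_tail:
  assumes "m > 0"
  shows "0 \<le> gf m t - Gp m n t" "gf m t - Gp m n t \<le> (real m - 1) * qq m ^ n / real m"
proof -
  have eq: "gf m t - Gp m n t = (\<Sum>i. dig m (i + n) t * qq m ^ Suc (i + n))"
    unfolding gf_def Gp_def
    by (subst suminf_minus_initial_segment[OF gf_summable[OF assms]]) simp
  have s: "summable (\<lambda>i. dig m (i + n) t * qq m ^ Suc (i + n))"
    using gf_summable[OF assms, of t] by (subst summable_iff_shift[where k=n]) 
  show "0 \<le> gf m t - Gp m n t" unfolding eq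
    by (rule suminf_nonneg[OF s]) (use dig_bounds[OF assms] qq_pos(1)[of m] in simp)
  have "(\<Sum>i. dig m (i + n) t * qq m ^ Suc (i + n)) \<le> (\<Sum>i. (real m - 1) * qq m ^ Suc (i + n))"
    by (rule suminf_le[OF _ s sums_summable[OF geom_sum_shift[OF assms]]])
       (use dig_bounds[OF assms] qq_pos(1)[of m] in \<open>simp add: mult_right_mono\<close>)
  then show "gf m t - Gp m n t \<le> (real m - 1) * qq m ^ n / real m"
    unfolding eq using sums_unique[OF geom_sum_shift[OF assms, of n]] by simp
qed


definition FF :: "nat \<Rightarrow> nat \<Rightarrow> real \<Rightarrow> int" where
  "FF m i t = \<lfloor>real m ^ i * t\<rfloor>"

lemma dig_FF: "dig m i t = real_of_int (FF m (Suc i) t - int m * FF m i t)"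
  by (simp add: dig_def FF_def)

lemma FF_div:
  assumes "m > 0" "i \<le> n"
  shows "FF m i t = FF m n t div (int m ^ (n - i))"
proof -
  have p: "real m ^ n = real m ^ i * real m ^ (n - i)" using assms by (simp flip: power_add)
  have "real m ^ i * t = (real m ^ n * t) / real m ^ (n - i)" using assms p by simp
  then have e: "real m ^ i * t = (real m ^ n * t) / real_of_int (int m ^ (n - i))" by simp
  have h: "\<lfloor>(real m ^ n * t) / real_of_int (int m ^ (n - i))\<rfloor> = \<lfloor>real m ^ n * t\<rfloor> div int m ^ (n - i)"
    by (rule floor_divide_real_eq_div) simp
  show ?thesis unfolding FF_def e by (rule h)
qed

lemma FF_agree:
  assumes "m > 0" "FF m n t = FF m n t'" "i \<le> n"
  shows "FF m i t = FF m i t'"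
  using FF_div[OF assms(1) assms(3)] assms(2) by metis

lemma Gp_agree:
  assumes "m > 0" "FF m n t = FF m n t'"
  shows "Gp m n t = Gp m n t'"
  unfolding Gp_def
proof (rule sum.cong[OF refl])
  fix i assume "i \<in> {..<n}"
  then have "Suc i \<le> n" "i \<le> n" by auto
  then show "dig m i t * qq m ^ Suc i = dig m i t' * qq m ^ Suc i"
    using FF_agree[OF assms] by (simp add: dig_FF)
qed

lemma sep_step:
  assumes m: "m > 0" and eq: "FF m j t = FF m j t'" and lt: "FF m (Suc j) t < FF m (Suc j) t'"
  shows "qq m ^ Suc j / real m \<le> gf m t' - gf m t"
proof -
  have G: "Gp m j t = Gp m j t'" using Gp_agree[OF m eq] .
  have d: "dig m j t + 1 \<le> dig m j t'" using eq lt unfolding dig_FF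
    by (simp add: of_int_less_iff[symmetric])
  have s: "\<And>u. Gp m (Suc j) u = Gp m j u + dig m j u * qq m ^ Suc j"
    by (simp add: Gp_def)
  have t1: "0 \<le> gf m t' - Gp m (Suc j) t'" using gf_tail(1)[OF m] .
  have t2: "gf m t - Gp m (Suc j) t \<le> (real m - 1) * qq m ^ Suc j / real m" using gf_tail(2)[OF m] .
  have qp: "0 \<le> qq m ^ Suc j" using qq_pos(1)[of m] by simp
  have "gf m t' - gf m t \<ge> (dig m j t' - dig m j t) * qq m ^ Suc j - (real m - 1) * qq m ^ Suc j / real m"
    using t1 t2 s[of t] s[of t'] G by (simp add: algebra_simps)
  moreover have "(dig m j t' - dig m j t) * qq m ^ Suc j \<ge> qq m ^ Suc j"
    using d qp by (metis diff_ge_0_iff_ge le_diff_eq mult_1 mult_right_mono add.commute)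
  moreover have "qq m ^ Suc j - (real m - 1) * qq m ^ Suc j / real m = qq m ^ Suc j / real m"
    using m by (simp add: field_simps)
  ultimately show ?thesis by linarith
qed

lemma sep:
  assumes m: "m > 0" and t: "0 \<le> t" "t < 1" and t': "0 \<le> t'" "t' < 1"
    and ne: "FF m n t \<noteq> FF m n t'"
  shows "qq m ^ n / real m \<le> \<bar>gf m t - gf m t'\<bar>"
  using ne
proof (induction n)
  case 0
  have "FF m 0 t = 0" "FF m 0 t' = 0" using t t' by (auto simp: FF_def floor_eq_iff)
  with 0 show ?case by simp
next
  case (Suc n)
  have qle: "qq m ^ Suc n / real m \<le> qq m ^ n / real m"
    using qq_pos[of m] m by (simp add: divide_right_mono mult_left_le_one_le)
  show ?case
  proof (cases "FF m n t = FF m n t'")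
    case False
    with Suc.IH qle show ?thesis by linarith
  next
    case True
    show ?thesis
    proof (cases "FF m (Suc n) t < FF m (Suc n) t'")
      case True
      with sep_step[OF m \<open>FF m n t = FF m n t'\<close>] show ?thesis by linarith
    next
      case False
      with Suc.prems have "FF m (Suc n) t' < FF m (Suc n) t" by linarith
      with sep_step[OF m \<open>FF m n t = FF m n t'\<close>[symmetric]] show ?thesis by linarith
    qed
  qed
qed


lemma gf_meas[measurable]: "gf m \<in> borel_measurable borel"
  unfolding gf_def[abs_def] dig_def by measurable

definition ss :: "nat \<Rightarrow> real" where "ss m = ln (real m) / ln (real m + 1)"

lemma qq_powr_ss:
  assumes "m \<ge> 2"
  shows "(qq m ^ n) powr ss m = (1 / real m) ^ n"
proof -
  have q0: "0 < qq m" by (simp add: qq_def)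
  have "qq m powr ss m = exp (ss m * ln (qq m))" using q0 by (simp add: powr_def)
  also have "ln (qq m) = - ln (real m + 1)" by (simp add: qq_def ln_div)
  also have "ss m * - ln (real m + 1) = - ln (real m)" using assms by (simp add: ss_def)
  also have "exp (- ln (real m)) = 1 / real m" using assms by (simp add: exp_minus exp_ln inverse_eq_divide)
  finally have "qq m powr ss m = 1 / real m" .
  then have h: "qq m powr ss m = 1 / real m" .
  have "(qq m ^ n) powr ss m = (qq m powr real n) powr ss m" by (simp add: powr_realpow q0)
  also have "\<dots> = (qq m powr ss m) powr real n" by (rule powr_powr_swap)
  also have "\<dots> = (1 / real m) ^ n" unfolding h using assms by (subst powr_realpow) auto
  finally show ?thesis .
qed

lemma small_set:
  assumes m: "m > 0" and r: "2 * r < qq m ^ n / real m"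
  shows "emeasure lborel {t\<in>{0..<1}. \<bar>gf m t - y\<bar> \<le> r} \<le> ennreal ((1 / real m) ^ n)"
proof (cases "{t\<in>{0..<1}. \<bar>gf m t - y\<bar> \<le> r} = {}")
  case True then show ?thesis by (simp only: True) simp
next
  case False
  then obtain t0 where t0: "t0 \<in> {0..<1}" "\<bar>gf m t0 - y\<bar> \<le> r" by auto
  define K where "K = FF m n t0"
  have mp: "real m ^ n > 0" using m by simp
  have sub: "{t\<in>{0..<1}. \<bar>gf m t - y\<bar> \<le> r} \<subseteq> {real_of_int K / real m ^ n .. real_of_int K / real m ^ n + (1 / real m) ^ n}"
  proof
    fix t assume "t \<in> {t\<in>{0..<1}. \<bar>gf m t - y\<bar> \<le> r}"
    then have t: "t \<in> {0..<1}" "\<bar>gf m t - y\<bar> \<le> r" by auto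
    have "FF m n t = K"
    proof (rule ccontr)
      assume "FF m n t \<noteq> K"
      then have "qq m ^ n / real m \<le> \<bar>gf m t - gf m t0\<bar>"
        using sep[OF m _ _ _ _ ] t t0 unfolding K_def by auto
      with t(2) t0(2) r show False by linarith
    qed
    then have "real_of_int K \<le> real m ^ n * t" "real m ^ n * t < real_of_int K + 1"
      unfolding FF_def by linarith+
    then show "t \<in> {real_of_int K / real m ^ n .. real_of_int K / real m ^ n + (1 / real m) ^ n}"
      using mp by (auto simp: field_simps power_one_over)
  qed
  have "emeasure lborel {t\<in>{0..<1}. \<bar>gf m t - y\<bar> \<le> r} \<le> emeasure lborel {real_of_int K / real m ^ n .. real_of_int K / real m ^ n + (1 / real m) ^ n}"
    by (rule emeasure_mono[OF sub]) simp
  also have "\<dots> = ennreal ((1 / real m) ^ n)" by simp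
  finally show ?thesis .
qed


lemma ss_nonneg: "m \<ge> 2 \<Longrightarrow> 0 \<le> ss m"
  by (simp add: ss_def)

definition KK :: "nat \<Rightarrow> real" where "KK m = (2 * real m * (real m + 1)) powr ss m"

lemma KK_pos: "m \<ge> 2 \<Longrightarrow> 0 < KK m"
  by (simp add: KK_def)

lemma holder:
  assumes m: "m \<ge> 2" and r: "r > 0"
  shows "emeasure lborel {t\<in>{0..<1}. \<bar>gf m t - y\<bar> \<le> r} \<le> ennreal (KK m * r powr ss m)"
proof -
  have m0: "m > 0" using m by simp
  have s0: "0 \<le> ss m" using ss_nonneg[OF m] .
  have KKr: "KK m * r powr ss m = (2 * real m * (real m + 1) * r) powr ss m"
    unfolding KK_def using r by (simp add: powr_mult)
  show ?thesis
  proof (cases "1 / real m \<le> 2 * r")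
    case True
    have "1 \<le> 2 * real m * r" using True m by (simp add: field_simps)
    also have "\<dots> \<le> 2 * real m * (real m + 1) * r" using r m by (simp add: mult_left_mono)
    finally have "1 \<le> KK m * r powr ss m" unfolding KKr using s0 by (rule ge_one_powr_ge_zero)
    have "emeasure lborel {t\<in>{0..<1}. \<bar>gf m t - y\<bar> \<le> r} \<le> emeasure lborel {0..<(1::real)}"
      by (rule emeasure_mono) auto
    also have "\<dots> = ennreal 1" by simp
    also have "\<dots> \<le> ennreal (KK m * r powr ss m)" using \<open>1 \<le> KK m * r powr ss m\<close> by (rule ennreal_leI)
    finally show ?thesis .
  next
    case False
    have q1: "qq m < 1" using qq_lt1[OF m0] .
    obtain n0 where n0: "qq m ^ n0 < 2 * r * real m" using real_arch_pow_inv[OF _ q1, of "2 * r * real m"] r m0 by auto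
    have ex: "qq m ^ n0 / real m \<le> 2 * r" using n0 m0 by (simp add: field_simps)
    define N where "N = (LEAST n. qq m ^ n / real m \<le> 2 * r)"
    have N1: "qq m ^ N / real m \<le> 2 * r" unfolding N_def by (rule LeastI[where P="\<lambda>n. qq m ^ n / real m \<le> 2 * r", OF ex])
    have N0: "N \<noteq> 0" proof assume "N = 0" then show False using N1 False by simp qed
    define n where "n = N - 1"
    have Nn: "N = Suc n" using N0 unfolding n_def by simp
    have "\<not> (qq m ^ n / real m \<le> 2 * r)"
      unfolding N_def using not_less_Least[of n "\<lambda>n. qq m ^ n / real m \<le> 2 * r"] Nn N_def by auto
    then have lt: "2 * r < qq m ^ n / real m" by simp
    have "emeasure lborel {t\<in>{0..<1}. \<bar>gf m t - y\<bar> \<le> r} \<le> ennreal ((1 / real m) ^ n)"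
      by (rule small_set[OF m0 lt])
    also have "(1 / real m) ^ n = (qq m ^ n) powr ss m" using qq_powr_ss[OF m] by simp
    also have "qq m ^ n = (real m + 1) * qq m ^ N" unfolding Nn by (simp add: qq_def)
    also have "\<dots> \<le> 2 * real m * (real m + 1) * r"
    proof -
      have "qq m ^ N \<le> 2 * r * real m" using N1 m0 by (simp add: field_simps)
      then have "(real m + 1) * qq m ^ N \<le> (real m + 1) * (2 * r * real m)"
        by (rule mult_left_mono) simp
      then show ?thesis by (simp add: algebra_simps)
    qed
    then have "((real m + 1) * qq m ^ N) powr ss m \<le> (2 * real m * (real m + 1) * r) powr ss m"
      using s0 qq_pos(1)[of m] by (intro powr_mono2) auto
    then have "ennreal (((real m + 1) * qq m ^ N) powr ss m) \<le> ennreal (KK m * r powr ss m)"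
      unfolding KKr by (rule ennreal_leI)
    finally show ?thesis .
  qed
qed


definition cen :: "nat \<Rightarrow> nat \<Rightarrow> nat \<Rightarrow> real" where
  "cen m n k = Gp m n (real k / real m ^ n)"

definition En :: "nat \<Rightarrow> nat \<Rightarrow> real set" where
  "En m n = (\<Union>k\<in>{..<m ^ n}. {cen m n k .. cen m n k + qq m ^ n})"

definition Ereal :: "nat \<Rightarrow> real set" where
  "Ereal m = (\<Inter>n. En m n)"

lemma closed_Ereal: "closed (Ereal m)"
  unfolding Ereal_def En_def by (intro closed_INT closed_UN) auto

lemma Ereal_borel[measurable]: "Ereal m \<in> sets borel"
  using closed_Ereal by (rule borel_closed)

lemma gf_in_Ereal:
  assumes m: "m > 0" and t: "0 \<le> t" "t < 1"
  shows "gf m t \<in> Ereal m"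
  unfolding Ereal_def
proof
  fix n
  define K where "K = FF m n t"
  have mp: "0 < real m ^ n" using m by simp
  have K0: "0 \<le> K" unfolding K_def FF_def using t mp by simp
  have "real m ^ n * t < real m ^ n" using t mp by simp
  then have Kl: "K < int m ^ n" unfolding K_def FF_def
    by (metis floor_less_iff of_int_of_nat_eq of_nat_power)
  define k where "k = nat K"
  have kl: "k < m ^ n" unfolding k_def using K0 Kl
    by (metis nat_less_iff of_nat_power)
  have "FF m n (real k / real m ^ n) = K" unfolding FF_def k_def using K0 mp by simp
  then have G: "Gp m n t = cen m n k" unfolding cen_def K_def by (rule Gp_agree[OF m, symmetric])
  have "gf m t \<in> {cen m n k .. cen m n k + qq m ^ n}"
  proof -
    have "(real m - 1) * qq m ^ n / real m \<le> qq m ^ n"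
      using m qq_pos(1)[of m] by (simp add: field_simps)
    then show ?thesis using gf_tail[OF m, of t n] G by auto
  qed
  then show "gf m t \<in> En m n" unfolding En_def using kl by auto
qed

lemma Ereal_null:
  assumes m: "m > 0"
  shows "emeasure lborel {x. x - c \<in> Ereal m} = 0"
proof -
  define a where "a = real m * qq m"
  have a0: "0 \<le> a" "a < 1" unfolding a_def qq_def by auto
  have bnd: "emeasure lborel {x. x - c \<in> Ereal m} \<le> ennreal (a ^ n)" for n
  proof -
    have sub: "{x. x - c \<in> Ereal m} \<subseteq> (\<Union>k\<in>{..<m ^ n}. {cen m n k + c .. cen m n k + c + qq m ^ n})"
      unfolding Ereal_def En_def by force
    have "emeasure lborel {x. x - c \<in> Ereal m} \<le> emeasure lborel (\<Union>k\<in>{..<m ^ n}. {cen m n k + c .. cen m n k + c + qq m ^ n})"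
      by (rule emeasure_mono[OF sub]) auto
    also have "\<dots> \<le> (\<Sum>k\<in>{..<m ^ n}. emeasure lborel {cen m n k + c .. cen m n k + c + qq m ^ n})"
      by (rule emeasure_subadditive_finite) auto
    also have "\<dots> = (\<Sum>k\<in>{..<m ^ n}. ennreal (qq m ^ n))"
      using qq_pos(1)[of m] by simp
    also have "\<dots> = ennreal (real (m ^ n) * qq m ^ n)"
      using qq_pos(1)[of m] by (simp add: ennreal_of_nat_eq_real_of_nat ennreal_mult)
    also have "real (m ^ n) * qq m ^ n = a ^ n" unfolding a_def by (simp add: power_mult_distrib)
    finally show ?thesis .
  qed
  have lim: "(\<lambda>n. ennreal (a ^ n)) \<longlonglongrightarrow> ennreal 0"
    using a0 by (intro tendsto_ennrealI LIMSEQ_power_zero) auto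
  have "emeasure lborel {x. x - c \<in> Ereal m} \<le> ennreal 0"
    by (rule tendsto_le[OF trivial_limit_sequentially lim tendsto_const]) (use bnd in auto)
  then show ?thesis by simp
qed


definition ee :: "real \<Rightarrow> real^2" where "ee x = x *\<^sub>R axis 1 1"

lemma ee_nth[simp]: "ee x $ 1 = x" "ee x $ 2 = 0"
  by (simp_all add: ee_def axis_def)

lemma dist_ee: "dist (ee a) (ee b) = \<bar>a - b\<bar>"
proof -
  have "ee a - ee b = (a - b) *\<^sub>R axis 1 1" by (simp add: ee_def algebra_simps)
  then show ?thesis by (simp add: dist_norm)
qed

lemma ee_cont: "continuous_on UNIV ee"
  unfolding ee_def by (intro continuous_intros)

lemma ee_meas[measurable]: "ee \<in> borel_measurable borel"
  using ee_cont by (rule borel_measurable_continuous_onI)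

lemma segS_ee: "p \<in> segS \<Longrightarrow> ee (p $ 1) = p"
  by (simp add: segS_def vec_eq_iff forall_2)

lemma ee_segS: "0 \<le> x \<Longrightarrow> x \<le> 1 \<Longrightarrow> ee x \<in> segS"
  by (simp add: segS_def)

lemma dist_ee_ge: "\<bar>a - p $ 1\<bar> \<le> dist (ee a) p"
proof -
  have "\<bar>(ee a - p) $ 1\<bar> \<le> norm (ee a - p)" by (rule component_le_norm_cart)
  then show ?thesis by (simp add: dist_norm)
qed

lemma gf_01: "m > 0 \<Longrightarrow> 0 \<le> gf m t \<and> gf m t \<le> 1"
proof -
  assume m: "m > 0"
  have "(real m - 1) / real m \<le> 1" using m by (simp add: field_simps)
  then show ?thesis using gf_tail[OF m, of t 0] by (simp add: Gp_def)
qed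

definition hh :: "nat \<Rightarrow> real \<Rightarrow> real^2" where
  "hh m t = (if t < 1 then ee (gf m t) else ee (t - 1))"

lemma hh_meas[measurable]: "hh m \<in> borel_measurable borel"
  unfolding hh_def by measurable

definition base :: "nat \<Rightarrow> (real^2) measure" where
  "base m = distr (density lborel (indicator {0..<2})) borel (hh m)"

definition E2 :: "nat \<Rightarrow> (real^2) set" where
  "E2 m = {p. p $ 2 = 0 \<and> p $ 1 \<in> Ereal m}"

lemma E2_borel[measurable]: "E2 m \<in> sets borel"
  unfolding E2_def by measurable

definition bk :: "real \<Rightarrow> nat \<Rightarrow> real" where
  "bk \<theta> k = 2 powr ((\<theta> - 1) * real k)"

definition ww :: "nat \<Rightarrow> real \<Rightarrow> nat \<Rightarrow> real^2 \<Rightarrow> real" where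
  "ww m \<theta> k p = (if p \<in> E2 m then 1 else bk \<theta> k)"

lemma ww_meas[measurable]: "ww m \<theta> k \<in> borel_measurable borel"
  unfolding ww_def by measurable

definition mm :: "nat \<Rightarrow> real \<Rightarrow> nat \<Rightarrow> (real^2) measure" where
  "mm m \<theta> k = density (base m) (\<lambda>p. ennreal (ww m \<theta> k p))"

definition Nset :: "nat \<Rightarrow> (real^2) set \<Rightarrow> ennreal" where
  "Nset m A = emeasure lborel {t\<in>{0..<1}. ee (gf m t) \<in> A}"

definition Lset :: "(real^2) set \<Rightarrow> ennreal" where
  "Lset A = emeasure lborel {t\<in>{1..<2}. ee (t - 1) \<in> A}"

lemma sets_mm[simp]: "sets (mm m \<theta> k) = sets borel"
  by (simp add: mm_def base_def)

lemma mm_formula: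
  assumes m: "m > 0" and A: "A \<in> sets borel"
  shows "emeasure (mm m \<theta> k) A = Nset m A + ennreal (bk \<theta> k) * Lset A"
proof -
  define S1 where "S1 = {t\<in>{0..<1}. ee (gf m t) \<in> A}"
  define S2 where "S2 = {t\<in>{1..<2::real}. ee (t - 1) \<in> A}"
  have [measurable]: "S1 \<in> sets borel" "S2 \<in> sets borel" unfolding S1_def S2_def using A by measurable
  have "emeasure (mm m \<theta> k) A = (\<integral>\<^sup>+ p. ennreal (ww m \<theta> k p) * indicator A p \<partial>base m)"
    unfolding mm_def using A by (subst emeasure_density) (auto simp: base_def mult.commute intro!: nn_integral_cong)
  also have "\<dots> = (\<integral>\<^sup>+ t. ennreal (ww m \<theta> k (hh m t)) * indicator A (hh m t) \<partial>density lborel (indicator {0..<2}))"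
    unfolding base_def using A by (subst nn_integral_distr) auto
  also have "\<dots> = (\<integral>\<^sup>+ t. indicator {0..<2} t * (ennreal (ww m \<theta> k (hh m t)) * indicator A (hh m t)) \<partial>lborel)"
    using A by (subst nn_integral_density) auto
  also have "\<dots> = (\<integral>\<^sup>+ t. indicator S1 t + ennreal (bk \<theta> k) * indicator S2 t \<partial>lborel)"
  proof (rule nn_integral_cong_AE)
    have nul: "{x. x - 1 \<in> Ereal m} \<in> null_sets lborel"
      using Ereal_null[OF m, of 1] by (auto simp: null_sets_def)
    have pw: "indicator {0..<2} t * (ennreal (ww m \<theta> k (hh m t)) * indicator A (hh m t)) = indicator S1 t + ennreal (bk \<theta> k) * indicator S2 t"
      if nt: "t - 1 \<notin> Ereal m" for t
    proof -
      show "indicator {0..<2} t * (ennreal (ww m \<theta> k (hh m t)) * indicator A (hh m t)) = indicator S1 t + ennreal (bk \<theta> k) * indicator S2 t"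
      proof (cases "t < 1")
        case True
        show ?thesis
        proof (cases "0 \<le> t")
          case True
          with \<open>t < 1\<close> have "gf m t \<in> Ereal m" by (intro gf_in_Ereal[OF m])
          then have "ee (gf m t) \<in> E2 m" by (simp add: E2_def)
          then show ?thesis using True \<open>t < 1\<close>
            by (simp add: hh_def ww_def S1_def S2_def indicator_def)
        next
          case False then show ?thesis by (simp add: S1_def S2_def indicator_def)
        qed
      next
        case False
        then have "ee (t - 1) \<notin> E2 m" using nt by (simp add: E2_def)
        then show ?thesis using False
          by (simp add: hh_def ww_def S1_def S2_def indicator_def)
      qed
    qed
    show "AE t in lborel. indicator {0..<2} t * (ennreal (ww m \<theta> k (hh m t)) * indicator A (hh m t)) = indicator S1 t + ennreal (bk \<theta> k) * indicator S2 t"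
      by (rule AE_I'[OF nul]) (use pw in auto)
  qed
  also have "\<dots> = emeasure lborel S1 + ennreal (bk \<theta> k) * emeasure lborel S2"
    by (subst nn_integral_add) (auto simp: nn_integral_cmult)
  finally show ?thesis unfolding Nset_def Lset_def S1_def S2_def .
qed


lemma N_cball:
  assumes m: "m \<ge> 2" and r: "r > 0"
  shows "Nset m (cball p r) \<le> ennreal (KK m * r powr ss m)"
proof -
  have "Nset m (cball p r) \<le> emeasure lborel {t\<in>{0..<1}. \<bar>gf m t - p $ 1\<bar> \<le> r}"
    unfolding Nset_def
  proof (rule emeasure_mono)
    show "{t \<in> {0..<1}. ee (gf m t) \<in> cball p r} \<subseteq> {t \<in> {0..<1}. \<bar>gf m t - p $ 1\<bar> \<le> r}"
      using dist_ee_ge by (auto simp: dist_commute intro: order_trans)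
  qed measurable
  also have "\<dots> \<le> ennreal (KK m * r powr ss m)" by (rule holder[OF m r])
  finally show ?thesis .
qed

lemma N_full:
  assumes "\<And>t. 0 \<le> t \<Longrightarrow> t < 1 \<Longrightarrow> ee (gf m t) \<in> A"
  shows "Nset m A = 1"
proof -
  have "{t\<in>{0..<1}. ee (gf m t) \<in> A} = {0..<1}" using assms by auto
  then show ?thesis unfolding Nset_def by simp
qed

lemma N_le1: "Nset m A \<le> 1"
proof -
  have "Nset m A \<le> emeasure lborel {0..<1::real}" unfolding Nset_def by (rule emeasure_mono) auto
  then show ?thesis by simp
qed

lemma L_le1: "Lset A \<le> 1"
proof -
  have "Lset A \<le> emeasure lborel {1..<2::real}" unfolding Lset_def by (rule emeasure_mono) auto
  then show ?thesis by simp
qed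

lemma L_cball:
  assumes r: "0 \<le> r"
  shows "Lset (cball p r) \<le> ennreal (2 * r)"
proof -
  have "Lset (cball p r) \<le> emeasure lborel {1 + p $ 1 - r .. 1 + p $ 1 + r}"
    unfolding Lset_def
  proof (rule emeasure_mono)
    show "{t \<in> {1..<2}. ee (t - 1) \<in> cball p r} \<subseteq> {1 + p $ 1 - r .. 1 + p $ 1 + r}"
    proof
      fix t assume "t \<in> {t \<in> {1..<2}. ee (t - 1) \<in> cball p r}"
      then have "dist (ee (t - 1)) p \<le> r" by (auto simp: dist_commute)
      with dist_ee_ge[of "t - 1" p] show "t \<in> {1 + p $ 1 - r .. 1 + p $ 1 + r}" by auto
    qed
  qed simp
  also have "\<dots> = ennreal (2 * r)" using r by simp
  finally show ?thesis .
qed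

lemma L_E2:
  assumes m: "m > 0"
  shows "Lset (B \<inter> E2 m) = 0"
proof -
  have "Lset (B \<inter> E2 m) \<le> emeasure lborel {x. x - 1 \<in> Ereal m}"
    unfolding Lset_def by (rule emeasure_mono) (auto simp: E2_def)
  then show ?thesis using Ereal_null[OF m, of 1] by simp
qed

lemma L_lower:
  assumes p: "p \<in> segS" and d: "0 < d" "d \<le> 1/2"
  shows "ennreal d \<le> Lset (ball p (2 * d))"
proof -
  have p1: "0 \<le> p $ 1" "p $ 1 \<le> 1" using p by (auto simp: segS_def)
  obtain a where a: "{a <..< a + d} \<subseteq> {t\<in>{1..<2}. \<bar>t - 1 - p $ 1\<bar> < 2 * d}"
  proof (cases "p $ 1 \<le> 1/2")
    case True
    show ?thesis by (rule that[of "1 + p $ 1"]) (use True d p1 in auto)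
  next
    case False
    show ?thesis by (rule that[of "1 + p $ 1 - d"]) (use False d p1 in auto)
  qed
  have "{t\<in>{1..<2}. \<bar>t - 1 - p $ 1\<bar> < 2 * d} \<subseteq> {t\<in>{1..<2}. ee (t - 1) \<in> ball p (2 * d)}"
  proof
    fix t assume "t \<in> {t\<in>{1..<2}. \<bar>t - 1 - p $ 1\<bar> < 2 * d}"
    then show "t \<in> {t\<in>{1..<2}. ee (t - 1) \<in> ball p (2 * d)}"
      using dist_ee[of "t - 1" "p $ 1"] segS_ee[OF p] by (auto simp: dist_commute)
  qed
  with a have sub: "{a <..< a + d} \<subseteq> {t\<in>{1..<2}. ee (t - 1) \<in> ball p (2 * d)}" by blast
  have [measurable]: "ball p (2 * d) \<in> sets borel" by (simp add: borel_open)
  have "{t\<in>{1..<2::real}. ee (t - 1) \<in> ball p (2 * d)} \<in> sets borel" by measurable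
  have "ennreal d = emeasure lborel {a <..< a + d}" using d by simp
  also have "\<dots> \<le> Lset (ball p (2 * d))" unfolding Lset_def
    by (rule emeasure_mono[OF sub]) (use \<open>{t\<in>{1..<2::real}. ee (t - 1) \<in> ball p (2 * d)} \<in> sets borel\<close> in simp)
  finally show ?thesis .
qed

lemma Lset_mono: "A \<subseteq> B \<Longrightarrow> B \<in> sets borel \<Longrightarrow> Lset A \<le> Lset B"
  unfolding Lset_def by (rule emeasure_mono) auto

lemma outside:
  assumes m: "m > 0" and A: "A \<inter> segS = {}"
  shows "Nset m A = 0" "Lset A = 0"
proof -
  have e: "{t\<in>{0..<1}. ee (gf m t) \<in> A} = {}" using A gf_01[OF m] ee_segS by fastforce
  show "Nset m A = 0" unfolding Nset_def by (simp only: e) simp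
  have e2: "{t\<in>{1..<2::real}. ee (t - 1) \<in> A} = {}" using A ee_segS by fastforce
  show "Lset A = 0" unfolding Lset_def by (simp only: e2) simp
qed


lemma muB_eq: "0 \<le> r \<Longrightarrow> muB x r = unit_ball_vol 2 * r ^ 2"
  unfolding muB_def measure_def using emeasure_cball[where c=x and r=r] by simp

lemma muB_ratio:
  assumes r: "0 < r" shows "muB x r / r powr \<theta> = unit_ball_vol 2 * r powr (2 - \<theta>)"
proof -
  have "r ^ 2 = r powr 2" using r by (simp add: powr_numeral)
  then have "muB x r = unit_ball_vol 2 * r powr 2" using r muB_eq[of r x] by simp
  moreover have "r powr 2 / r powr \<theta> = r powr (2 - \<theta>)" by (simp add: powr_diff)
  ultimately show ?thesis by (metis times_divide_eq_right)
qed

lemma V_pos: "0 < unit_ball_vol 2" by simp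

lemma bk_eq: "bk \<theta> k = (2 ^ k) powr (\<theta> - 1)"
proof -
  have "(2::real) ^ k = 2 powr real k" by (simp add: powr_realpow)
  then have "(2 ^ k) powr (\<theta> - 1) = 2 powr (real k * (\<theta> - 1))" by (simp add: powr_powr)
  then show ?thesis unfolding bk_def by (simp add: mult.commute)
qed

lemma bk_pos: "0 < bk \<theta> k" by (simp add: bk_def)

lemma bk_ge1: "1 < \<theta> \<Longrightarrow> 1 \<le> bk \<theta> k"
  unfolding bk_def by (rule ge_one_powr_ge_zero) auto

lemma bk0: "bk \<theta> 0 = 1" by (simp add: bk_def)

lemma closed_segS: "closed segS"
  unfolding segS_def by (intro closed_Collect_conj closed_Collect_le closed_Collect_eq continuous_intros)

lemma choose_m:
  assumes a: "0 < a" "a < 1"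
  shows "\<exists>m\<ge>2. a < ss m"
proof -
  define m where "m = nat \<lceil>exp (a / (1 - a))\<rceil> + 2"
  have m2: "m \<ge> 2" unfolding m_def by simp
  have "exp (a / (1 - a)) < real m" unfolding m_def by linarith
  then have "ln (exp (a / (1 - a))) < ln (real m)"
    using m2 by (subst ln_less_cancel_iff) auto
  then have L: "a / (1 - a) < ln (real m)" by simp
  have Lpos: "0 < ln (real m)" using m2 by simp
  have e2: "2 \<le> exp (1::real)" using exp_ge_add_one_self[of 1] by simp
  have "real m + 1 \<le> exp 1 * real m"
  proof -
    have "real m + 1 \<le> 2 * real m" using m2 by simp
    also have "\<dots> \<le> exp 1 * real m" using e2 by (simp add: mult_right_mono)
    finally show ?thesis .
  qed
  then have "ln (real m + 1) \<le> ln (exp 1 * real m)" using m2 by (subst ln_le_cancel_iff) auto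
  also have "\<dots> = 1 + ln (real m)" using m2 by (simp add: ln_mult)
  finally have l1: "ln (real m + 1) \<le> 1 + ln (real m)" .
  have lp1: "0 < ln (real m + 1)" using m2 by simp
  have "a * (1 + ln (real m)) < ln (real m)"
    using L a by (simp add: field_simps)
  moreover have "a * ln (real m + 1) \<le> a * (1 + ln (real m))" using l1 a by simp
  ultimately have "a * ln (real m + 1) < ln (real m)" by linarith
  then have "a < ss m" unfolding ss_def using lp1 by (simp add: field_simps)
  with m2 show ?thesis by blast
qed


context
  fixes m :: nat and \<theta> :: real
  assumes m2: "m \<ge> 2" and th1: "1 < \<theta>" and th2: "\<theta> < 2" and sm: "2 - \<theta> < ss m"
begin

lemma m0: "m > 0" using m2 by simp

lemma mmf: "A \<in> sets borel \<Longrightarrow> emeasure (mm m \<theta> k) A = Nset m A + ennreal (bk \<theta> k) * Lset A"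
  by (rule mm_formula[OF m0])

lemma NU: "Nset m UNIV = 1" by (rule N_full) simp

lemma is_meas: "is_measure2 (mm m \<theta> k)"
  unfolding is_measure2_def
proof (intro conjI allI impI)
  show "sets (mm m \<theta> k) = sets borel" by simp
  show "emeasure (mm m \<theta> k) UNIV \<noteq> 0" using mmf[of UNIV k] NU by simp
  fix K :: "(real^2) set" assume "compact K"
  then have Kb: "K \<in> sets borel" by (simp add: borel_compact)
  have "emeasure (mm m \<theta> k) K = Nset m K + ennreal (bk \<theta> k) * Lset K" using mmf[OF Kb] .
  also have "\<dots> \<le> 1 + ennreal (bk \<theta> k) * 1"
    by (intro add_mono mult_left_mono N_le1 L_le1) simp
  also have "\<dots> < \<infinity>" by (simp flip: ennreal_plus)
  finally show "emeasure (mm m \<theta> k) K < \<infinity>" .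
qed

lemma supp_eq: "supp (mm m \<theta> k) = segS"
proof
  show "supp (mm m \<theta> k) \<subseteq> segS"
  proof
    fix p assume p: "p \<in> supp (mm m \<theta> k)"
    show "p \<in> segS"
    proof (rule ccontr)
      assume "p \<notin> segS"
      then obtain r where r: "r > 0" "ball p r \<subseteq> - segS"
        using closed_segS by (metis open_Compl open_contains_ball Compl_iff)
      then have d: "ball p r \<inter> segS = {}" by auto
      have "emeasure (mm m \<theta> k) (ball p r) = 0"
        using mmf[of "ball p r" k] outside[OF m0 d] by (simp add: borel_open)
      with p r show False unfolding supp_def by auto
    qed
  qed
  show "segS \<subseteq> supp (mm m \<theta> k)"
  proof
    fix p assume p: "p \<in> segS"
    show "p \<in> supp (mm m \<theta> k)" unfolding supp_def
    proof (intro CollectI allI impI)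
      fix r :: real assume r: "r > 0"
      define d where "d = min (r / 2) (1 / 2)"
      have d0: "0 < d" "d \<le> 1/2" "2 * d \<le> r" using r by (auto simp: d_def)
      have "ennreal d \<le> Lset (ball p (2 * d))" by (rule L_lower[OF p d0(1,2)])
      also have "\<dots> \<le> Lset (ball p r)" by (rule Lset_mono) (use d0 in \<open>auto simp: borel_open\<close>)
      finally have "0 < Lset (ball p r)" using d0 by (metis ennreal_eq_0_iff not_gr_zero order.order_iff_strict order.strict_trans1 linorder_not_le)
      then have pos: "0 < ennreal (bk \<theta> k) * Lset (ball p r)" using bk_pos[of \<theta> k]
        by (simp add: ennreal_zero_less_mult_iff)
      have le: "ennreal (bk \<theta> k) * Lset (ball p r) \<le> Nset m (ball p r) + ennreal (bk \<theta> k) * Lset (ball p r)"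
        by (simp add: add_increasing)
      have "0 < Nset m (ball p r) + ennreal (bk \<theta> k) * Lset (ball p r)"
        using pos le by (rule order.strict_trans2)
      then show "0 < emeasure (mm m \<theta> k) (ball p r)"
        by (subst mmf) (auto simp: borel_open)
    qed
  qed
qed


definition C1 :: real where "C1 = (KK m + 2) / unit_ball_vol 2"

lemma M2:
  assumes r: "0 < r" "r \<le> (1/2) ^ k"
  shows "emeasure (mm m \<theta> k) (cball x r) \<le> ennreal (C1 * muB x r / r powr \<theta>)"
proof -
  have "(1/2::real) ^ k \<le> 1" by (rule power_le_one) auto
  then have r1: "r \<le> 1" using r(2) by linarith
  have cb: "cball x r \<in> sets borel" by (simp add: borel_closed)
  have "emeasure (mm m \<theta> k) (cball x r) = Nset m (cball x r) + ennreal (bk \<theta> k) * Lset (cball x r)"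
    using mmf[OF cb] .
  also have "\<dots> \<le> ennreal (KK m * r powr ss m) + ennreal (bk \<theta> k) * ennreal (2 * r)"
    by (intro add_mono mult_left_mono N_cball[OF m2 r(1)] L_cball) (use r in auto)
  also have "\<dots> = ennreal (KK m * r powr ss m + bk \<theta> k * (2 * r))"
    using r bk_pos[of \<theta> k] KK_pos[OF m2] by (simp add: ennreal_mult ennreal_plus)
  also have "\<dots> \<le> ennreal (C1 * muB x r / r powr \<theta>)"
  proof (rule ennreal_leI)
    have a: "r powr ss m \<le> r powr (2 - \<theta>)"
      using sm r r1 by (intro powr_mono') auto
    have "2 ^ k * r \<le> 1" using r(2) by (simp add: field_simps power_one_over)
    then have "(2 ^ k * r) powr (\<theta> - 1) \<le> 1" using r th1 by (intro powr_le1) auto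
    then have "bk \<theta> k * r powr (\<theta> - 1) \<le> 1" unfolding bk_eq using r by (simp add: powr_mult)
    then have "bk \<theta> k * r powr (\<theta> - 1) * r powr (2 - \<theta>) \<le> 1 * r powr (2 - \<theta>)"
      by (rule mult_right_mono) simp
    then have "bk \<theta> k * r powr (\<theta> - 1) * r powr (2 - \<theta>) \<le> r powr (2 - \<theta>)" by simp
    moreover have "r powr (\<theta> - 1) * r powr (2 - \<theta>) = r" using r by (simp flip: powr_add)
    ultimately have b: "bk \<theta> k * r \<le> r powr (2 - \<theta>)" by (simp add: mult.assoc)
    have "KK m * r powr ss m + bk \<theta> k * (2 * r) \<le> (KK m + 2) * r powr (2 - \<theta>)"
    proof -
      have a': "KK m * r powr ss m \<le> KK m * r powr (2 - \<theta>)"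
        by (rule mult_left_mono[OF a]) (use KK_pos[OF m2] in simp)
      show ?thesis using a' b by (simp add: algebra_simps)
    qed
    also have "\<dots> = C1 * muB x r / r powr \<theta>"
    proof -
      have "unit_ball_vol 2 \<noteq> 0" using V_pos by (metis less_irrefl)
      then have "C1 * (muB x r / r powr \<theta>) = (KK m + 2) * r powr (2 - \<theta>)"
        unfolding C1_def muB_ratio[OF r(1), of x \<theta>] by simp
      then show ?thesis by simp
    qed
    finally show "KK m * r powr ss m + bk \<theta> k * (2 * r) \<le> C1 * muB x r / r powr \<theta>" .
  qed
  finally show ?thesis .
qed

definition C2 :: real where "C2 = 1 / (2 * unit_ball_vol 2)"

lemma M3:
  assumes x: "x \<in> segS" and r: "(1/2) ^ k \<le> r" "r \<le> 1"
  shows "ennreal (C2 * muB x r / r powr \<theta>) \<le> emeasure (mm m \<theta> k) (cball x r)"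
proof -
  have "0 < (1/2::real) ^ k" by simp
  then have r0: "0 < r" using r(1) by linarith
  have cb: "cball x r \<in> sets borel" by (simp add: borel_closed)
  have "C2 * muB x r / r powr \<theta> = C2 * (muB x r / r powr \<theta>)" by simp
  also have "\<dots> = r powr (2 - \<theta>) / 2"
  proof -
    have "unit_ball_vol 2 \<noteq> 0" using V_pos by (metis less_irrefl)
    then show ?thesis unfolding C2_def muB_ratio[OF r0, of x \<theta>] by simp
  qed
  also have "\<dots> \<le> bk \<theta> k * (r / 2)"
  proof -
    have "1 \<le> 2 ^ k * r" using r(1) by (simp add: field_simps power_one_over)
    then have "1 \<le> (2 ^ k * r) powr (\<theta> - 1)" using th1 by (intro ge_one_powr_ge_zero) auto
    then have "1 \<le> bk \<theta> k * r powr (\<theta> - 1)" unfolding bk_eq using r0 by (simp add: powr_mult)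
    then have "1 * r powr (2 - \<theta>) \<le> bk \<theta> k * r powr (\<theta> - 1) * r powr (2 - \<theta>)"
      by (rule mult_right_mono) simp
    then have "r powr (2 - \<theta>) \<le> bk \<theta> k * r powr (\<theta> - 1) * r powr (2 - \<theta>)" by simp
    moreover have "r powr (\<theta> - 1) * r powr (2 - \<theta>) = r" using r0 by (simp flip: powr_add)
    ultimately have "r powr (2 - \<theta>) \<le> bk \<theta> k * r" by (simp add: mult.assoc)
    then show ?thesis by simp
  qed
  finally have ineq: "C2 * muB x r / r powr \<theta> \<le> bk \<theta> k * (r / 2)" .
  have "ennreal (C2 * muB x r / r powr \<theta>) \<le> ennreal (bk \<theta> k) * ennreal (r / 2)"
    using ineq bk_pos[of \<theta> k] r0 by (simp add: ennreal_mult[symmetric] ennreal_leI)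
  also have "\<dots> \<le> ennreal (bk \<theta> k) * Lset (ball x (2 * (r / 2)))"
    by (intro mult_left_mono L_lower[OF x]) (use r0 r in auto)
  also have "\<dots> \<le> ennreal (bk \<theta> k) * Lset (cball x r)"
    by (intro mult_left_mono Lset_mono) (auto simp: borel_closed)
  also have "\<dots> \<le> Nset m (cball x r) + ennreal (bk \<theta> k) * Lset (cball x r)"
    by (simp add: add_increasing)
  also have "\<dots> = emeasure (mm m \<theta> k) (cball x r)" using mmf[OF cb] by simp
  finally show ?thesis .
qed





lemma mm0: "mm m \<theta> 0 = base m"
  unfolding mm_def ww_def bk0 by (simp add: density_1)

lemma half_powr: "(1/2::real) powr y = 2 powr (- y)"
  by (simp add: powr_divide powr_minus_divide)

lemma ratio:
  shows "(1/2) powr (\<theta> * real j) / 1 \<le> ww m \<theta> k x / ww m \<theta> (k + j) x \<and> ww m \<theta> k x / ww m \<theta> (k + j) x \<le> 1"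
proof (cases "x \<in> E2 m")
  case True
  have "(1/2::real) powr (\<theta> * real j) \<le> 1" using th1 by (intro powr_le1) auto
  moreover have "ww m \<theta> k x = 1" "ww m \<theta> (k + j) x = 1" using True by (simp_all add: ww_def)
  ultimately show ?thesis by simp
next
  case False
  have "ww m \<theta> k x / ww m \<theta> (k + j) x = 2 powr ((\<theta> - 1) * real k - (\<theta> - 1) * real (k + j))"
    using False by (simp add: ww_def bk_def powr_diff)
  also have "(\<theta> - 1) * real k - (\<theta> - 1) * real (k + j) = - ((\<theta> - 1) * real j)"
    by (simp add: algebra_simps)
  finally have e: "ww m \<theta> k x / ww m \<theta> (k + j) x = 2 powr (- ((\<theta> - 1) * real j))" .
  have 1: "2 powr (- ((\<theta> - 1) * real j)) \<le> 2 powr (0::real)"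
    using th1 by (intro powr_mono) auto
  have 2: "2 powr (- (\<theta> * real j)) \<le> 2 powr (- ((\<theta> - 1) * real j))"
    using th1 by (intro powr_mono) (auto simp: algebra_simps)
  have 0: "2 powr (0::real) = 1" by simp
  show ?thesis unfolding e half_powr div_by_1 using 1 2 0 by linarith
qed

lemma M4:
  "\<exists>w :: nat \<Rightarrow> real^2 \<Rightarrow> real.
        (\<forall>k. w k \<in> borel_measurable borel \<and> (\<exists>B. AE x in mm m \<theta> 0. \<bar>w k x\<bar> \<le> B) \<and>
             mm m \<theta> k = density (mm m \<theta> 0) (\<lambda>x. ennreal (w k x))) \<and>
        (\<exists>C3>0. \<forall>k j. AE x in mm m \<theta> 0. x \<in> segS \<longrightarrow>
             (1/2) powr (\<theta> * real j) / C3 \<le> w k x / w (k + j) x \<and> w k x / w (k + j) x \<le> C3)"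
proof (intro exI[of _ "ww m \<theta>"] conjI allI)
  fix k
  show "ww m \<theta> k \<in> borel_measurable borel" by (rule ww_meas)
  show "\<exists>B. AE x in mm m \<theta> 0. \<bar>ww m \<theta> k x\<bar> \<le> B"
  proof (rule exI[of _ "max 1 (bk \<theta> k)"], rule AE_I2)
    fix x
    show "\<bar>ww m \<theta> k x\<bar> \<le> max 1 (bk \<theta> k)" using bk_pos[of \<theta> k] by (simp add: ww_def)
  qed
  show "mm m \<theta> k = density (mm m \<theta> 0) (\<lambda>x. ennreal (ww m \<theta> k x))"
    by (subst mm0) (simp only: mm_def)
next
  show "\<exists>C3>0. \<forall>k j. AE x in mm m \<theta> 0. x \<in> segS \<longrightarrow>
             (1/2) powr (\<theta> * real j) / C3 \<le> ww m \<theta> k x / ww m \<theta> (k + j) x \<and> ww m \<theta> k x / ww m \<theta> (k + j) x \<le> C3"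
  proof (rule exI[of _ 1], intro conjI allI)
    fix k j
    show "AE x in mm m \<theta> 0. x \<in> segS \<longrightarrow>
             (1/2) powr (\<theta> * real j) / 1 \<le> ww m \<theta> k x / ww m \<theta> (k + j) x \<and> ww m \<theta> k x / ww m \<theta> (k + j) x \<le> 1"
      by (rule AE_I2) (rule impI, rule ratio)
  qed simp
qed




lemma Mc: "M_cond \<theta> segS (mm m \<theta>) (1/2)"
  unfolding M_cond_def
proof (intro conjI)
  show "\<forall>k. is_measure2 (mm m \<theta> k)" by (intro allI is_meas)
  show "\<forall>k. supp (mm m \<theta> k) = segS" by (intro allI supp_eq)
  have C1p: "C1 > 0" unfolding C1_def using KK_pos[OF m2] V_pos by simp
  show "\<exists>C1>0. \<forall>k x r. 0 < r \<and> r \<le> (1/2) ^ k \<longrightarrow>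
        emeasure (mm m \<theta> k) (cball x r) \<le> ennreal (C1 * muB x r / r powr \<theta>)"
  proof (intro exI[of _ C1] conjI allI impI)
    fix k x r assume "0 < r \<and> r \<le> (1/2::real) ^ k"
    then show "emeasure (mm m \<theta> k) (cball x r) \<le> ennreal (C1 * muB x r / r powr \<theta>)"
      using M2 by blast
  qed (rule C1p)
  have C2p: "C2 > 0" unfolding C2_def using V_pos by simp
  show "\<exists>C2>0. \<forall>k x r. x \<in> segS \<and> (1/2) ^ k \<le> r \<and> r \<le> 1 \<longrightarrow>
        ennreal (C2 * muB x r / r powr \<theta>) \<le> emeasure (mm m \<theta> k) (cball x r)"
  proof (intro exI[of _ C2] conjI allI impI)
    fix k x r assume "x \<in> segS \<and> (1/2::real) ^ k \<le> r \<and> r \<le> 1"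
    then show "ennreal (C2 * muB x r / r powr \<theta>) \<le> emeasure (mm m \<theta> k) (cball x r)"
      using M3 by blast
  qed (rule C2p)
  show "\<exists>w :: nat \<Rightarrow> real^2 \<Rightarrow> real.
        (\<forall>k. w k \<in> borel_measurable borel \<and> (\<exists>B. AE x in mm m \<theta> 0. \<bar>w k x\<bar> \<le> B) \<and>
             mm m \<theta> k = density (mm m \<theta> 0) (\<lambda>x. ennreal (w k x))) \<and>
        (\<exists>C3>0. \<forall>k j. AE x in mm m \<theta> 0. x \<in> segS \<longrightarrow>
             (1/2) powr (\<theta> * real j) / C3 \<le> w k x / w (k + j) x \<and> w k x / w (k + j) x \<le> C3)"
    by (rule M4)
qed simp_all


lemma fin_cball: "emeasure (mm m \<theta> k) (cball x r) < \<infinity>"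
  using is_meas[of k] unfolding is_measure2_def by (simp add: compact_cball)

lemma fin_sub: "A \<in> sets borel \<Longrightarrow> A \<subseteq> cball x r \<Longrightarrow> emeasure (mm m \<theta> k) A < \<infinity>"
  using emeasure_mono[of A "cball x r" "mm m \<theta> k"] fin_cball[of k x r]
  by (auto simp: borel_closed)

lemma ratio_bound:
  assumes eps: "0 < \<epsilon>" "\<epsilon> < 1" and D2: "D2 > 0"
    and M3': "\<forall>k x r. x \<in> segS \<and> \<epsilon> ^ k \<le> r \<and> r \<le> 1 \<longrightarrow>
        ennreal (D2 * muB x r / r powr \<theta>) \<le> emeasure (mm m \<theta> k) (cball x r)"
    and x: "x \<in> segS \<inter> E2 m"
  shows "measure (mm m \<theta> k) (cball x (\<epsilon> ^ k) \<inter> (segS \<inter> E2 m)) / measure (mm m \<theta> k) (cball x (\<epsilon> ^ k))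
         \<le> (KK m / (D2 * unit_ball_vol 2)) * (\<epsilon> powr (ss m - (2 - \<theta>))) ^ k"
proof -
  define r where "r = \<epsilon> ^ k"
  have r0: "0 < r" unfolding r_def using eps by simp
  have r1: "r \<le> 1" unfolding r_def using eps by (simp add: power_le_one)
  have Eb: "segS \<inter> E2 m \<in> sets borel" using closed_segS by (simp add: borel_closed)
  have cb: "cball x r \<in> sets borel" by (simp add: borel_closed)
  have Ab: "cball x r \<inter> (segS \<inter> E2 m) \<in> sets borel" using Eb cb by simp
  have "emeasure (mm m \<theta> k) (cball x r \<inter> (segS \<inter> E2 m)) = Nset m (cball x r \<inter> (segS \<inter> E2 m))"
    using mmf[OF Ab] L_E2[OF m0, of "cball x r \<inter> segS"] by (simp add: Int_assoc)
  also have "\<dots> \<le> Nset m (cball x r)" unfolding Nset_def by (rule emeasure_mono) (auto simp: borel_closed)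
  also have "\<dots> \<le> ennreal (KK m * r powr ss m)" by (rule N_cball[OF m2 r0])
  finally have nu: "emeasure (mm m \<theta> k) (cball x r \<inter> (segS \<inter> E2 m)) \<le> ennreal (KK m * r powr ss m)" .
  have fn: "emeasure (mm m \<theta> k) (cball x r \<inter> (segS \<inter> E2 m)) \<noteq> top"
    using fin_sub[OF Ab, of x r k] by auto
  have num: "measure (mm m \<theta> k) (cball x r \<inter> (segS \<inter> E2 m)) \<le> KK m * r powr ss m"
    using nu emeasure_eq_ennreal_measure[OF fn] KK_pos[OF m2]
    by (metis ennreal_le_iff mult_nonneg_nonneg less_imp_le powr_ge_zero)
  have "ennreal (D2 * muB x r / r powr \<theta>) \<le> emeasure (mm m \<theta> k) (cball x r)"
    using M3' x r1 unfolding r_def by auto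
  moreover have fd: "emeasure (mm m \<theta> k) (cball x r) \<noteq> top" using fin_cball[of k x r] by auto
  moreover have "D2 * muB x r / r powr \<theta> = D2 * unit_ball_vol 2 * r powr (2 - \<theta>)"
  proof -
    have "D2 * muB x r / r powr \<theta> = D2 * (muB x r / r powr \<theta>)" by simp
    then show ?thesis unfolding muB_ratio[OF r0, of x \<theta>] by simp
  qed
  ultimately have den: "D2 * unit_ball_vol 2 * r powr (2 - \<theta>) \<le> measure (mm m \<theta> k) (cball x r)"
    using emeasure_eq_ennreal_measure[OF fd] by (simp add: ennreal_le_iff)
  have dpos: "0 < D2 * unit_ball_vol 2 * r powr (2 - \<theta>)" using D2 V_pos r0 by simp
  have "measure (mm m \<theta> k) (cball x r \<inter> (segS \<inter> E2 m)) / measure (mm m \<theta> k) (cball x r)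
        \<le> (KK m * r powr ss m) / (D2 * unit_ball_vol 2 * r powr (2 - \<theta>))"
    using num den dpos KK_pos[OF m2] by (intro frac_le) auto
  also have "\<dots> = (KK m / (D2 * unit_ball_vol 2)) * (r powr ss m / r powr (2 - \<theta>))"
    by simp
  also have "r powr ss m / r powr (2 - \<theta>) = r powr (ss m - (2 - \<theta>))" by (simp add: powr_diff)
  also have "r powr (ss m - (2 - \<theta>)) = (\<epsilon> powr (ss m - (2 - \<theta>))) ^ k"
    unfolding r_def using eps by (simp add: powr_realpow[symmetric] powr_powr powr_powr_swap mult.commute)
  finally show ?thesis unfolding r_def .
qed

lemma notM5:
  assumes Mc: "M_cond \<theta> segS (mm m \<theta>) \<epsilon>"
  shows "\<not> M5_cond segS (mm m \<theta>) \<epsilon>"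
proof
  assume M5: "M5_cond segS (mm m \<theta>) \<epsilon>"
  from Mc have eps: "0 < \<epsilon>" "\<epsilon> < 1" unfolding M_cond_def by auto
  from Mc obtain D2 where D2: "D2 > 0" and M3': "\<forall>k x r. x \<in> segS \<and> \<epsilon> ^ k \<le> r \<and> r \<le> 1 \<longrightarrow>
        ennreal (D2 * muB x r / r powr \<theta>) \<le> emeasure (mm m \<theta> k) (cball x r)"
    unfolding M_cond_def by blast
  define E where "E = segS \<inter> E2 m"
  have Eb: "E \<in> sets borel" unfolding E_def using closed_segS by (simp add: borel_closed)
  have ES: "E \<subseteq> segS" unfolding E_def by auto
  define q where "q = \<epsilon> powr (ss m - (2 - \<theta>))"
  define c0 where "c0 = KK m / (D2 * unit_ball_vol 2)"
  have q: "0 \<le> q" "q < 1"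
  proof -
    show "0 \<le> q" unfolding q_def by simp
    have "ln \<epsilon> < 0" using eps by simp
    then have "(ss m - (2 - \<theta>)) * ln \<epsilon> < 0" using sm by (simp add: mult_pos_neg)
    then show "q < 1" unfolding q_def powr_def using eps by simp
  qed
  have lim: "(\<lambda>k. ereal (c0 * q ^ k)) \<longlonglongrightarrow> ereal 0"
    using q by (intro tendsto_ereal tendsto_mult_right_zero LIMSEQ_power_zero) auto
  have ls: "limsup (\<lambda>k. ereal (measure (mm m \<theta> k) (cball x (\<epsilon> ^ k) \<inter> E) /
                               measure (mm m \<theta> k) (cball x (\<epsilon> ^ k)))) \<le> 0" if x: "x \<in> E" for x
  proof -
    have "limsup (\<lambda>k. ereal (measure (mm m \<theta> k) (cball x (\<epsilon> ^ k) \<inter> E) /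
                               measure (mm m \<theta> k) (cball x (\<epsilon> ^ k)))) \<le> limsup (\<lambda>k. ereal (c0 * q ^ k))"
      by (intro Limsup_mono always_eventually allI)
         (use ratio_bound[OF eps D2 M3'] x in \<open>simp add: E_def c0_def q_def\<close>)
    also have "limsup (\<lambda>k. ereal (c0 * q ^ k)) = ereal 0"
      by (rule lim_imp_Limsup[OF trivial_limit_sequentially lim])
    finally show ?thesis by (simp add: zero_ereal_def)
  qed
  have "AE x in mm m \<theta> 0. x \<in> E \<longrightarrow>
           limsup (\<lambda>k. ereal (measure (mm m \<theta> k) (cball x (\<epsilon> ^ k) \<inter> E) /
                               measure (mm m \<theta> k) (cball x (\<epsilon> ^ k)))) > 0"
    using M5 Eb ES unfolding M5_cond_def by blast
  then have "AE x in mm m \<theta> 0. x \<notin> E"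
    by eventually_elim (use ls in force)
  then have "emeasure (mm m \<theta> 0) E = 0"
    by (subst (asm) AE_iff_measurable[of E]) (use Eb sets_eq_imp_space_eq[OF sets_mm[of m \<theta> 0]] in auto)
  moreover have "emeasure (mm m \<theta> 0) E = 1 + ennreal (bk \<theta> 0) * Lset E"
  proof -
    have "Nset m E = 1"
    proof (rule N_full)
      fix t :: real assume "0 \<le> t" "t < 1"
      then show "ee (gf m t) \<in> E" unfolding E_def E2_def
        using gf_in_Ereal[OF m0] gf_01[OF m0, of t] ee_segS by auto
    qed
    then show ?thesis using mmf[OF Eb] by simp
  qed
  ultimately show False by simp
qed

end


theorem mainTheorem10:
  fixes \<theta> :: real
  assumes "1 < \<theta>" and "\<theta> < 2"
  shows "\<exists>m. m \<in> MFam \<theta> segS - MFam_str \<theta> segS"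
proof -
  have a: "0 < 2 - \<theta>" "2 - \<theta> < 1" using assms by auto
  obtain m where m: "m \<ge> 2" "2 - \<theta> < ss m" using choose_m[OF a] by blast
  have "mm m \<theta> \<in> MFam \<theta> segS" unfolding MFam_def using Mc[OF m(1) assms m(2)] by blast
  moreover have "mm m \<theta> \<notin> MFam_str \<theta> segS" unfolding MFam_str_def using notM5[OF m(1) assms m(2)] by blast
  ultimately show ?thesis by blast
qed

end
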